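(* Let $\mathcal{P}$ be a bidirected 1-dimensional PVASS, $k\in\mathbb{N}$, and $p,q$ states with $\gamma_k(p,q)=(a,b)$. If there exists a path $P\in\mathrm{Paths}(p,q)_k$ with $w(P)>b$, then $\delta_k(p)\ge m(P)$.
   Context: A 1-dimensional PVASS $\mathcal{P}=(Q,\Gamma,T)$ has transitions $(p,v,\alpha,q)$ with $v\in\mathbb{Z}$, $\alpha\in\{a,\bar a\mid a\in\Gamma\}\cup\{\varepsilon\}$; it is bidirected if $(p,v,\alpha,q)\in T$ implies $(q,-v,\bar\alpha,p)\in T$ ($\bar{\bar a}=a$, $\bar\varepsilon=\varepsilon$). The one-step $\mathbb{Z}$-relation $\hookrightarrow$ on $Q\times\mathbb{Z}\times\Gamma^*$ is defined like the usual step relation (push $\alpha\in\Gamma$, pop $\bar a$ when the top is $a$, add $v$ to the counter) but without requiring the counter to stay nonnegative. A path from $p$ to $q$ is a start state $p$ together with a sequence of transitions inducing a $\hookrightarrow$-run $(p_1,x_1,w_1)\hookrightarrow\dots\hookrightarrow(p_j,x_j,w_j)$ with $p_1=p$, $p_j=q$, $x_1=0$, $w_1=w_j=\varepsilon$. For such $P$: $\mathit{MaxSH}(P)=\max_i|w_i|$, $w(P)=x_j$, $m(P)=\min_i x_i$ ($\le0$). $\mathrm{Paths}(p,q)_k$ is the set of paths from $p$ to $q$ with $\mathit{MaxSH}\le k$. Define $\gamma_k(p,q)=(a,b)$ with $a=\max\{m(P)\mid P\in\mathrm{Paths}(p,q)_k\}$ and $b=\sup\{w(P)\mid P\in\mathrm{Paths}(p,q)_k,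 m(P)=a\}$, where $\max\emptyset=\sup\emptyset=-\infty$ and $b$ may be $\omega$ (i.e.\ $+\infty$). Define $\delta_k(p)=\max\{m(P)\mid P\in\mathrm{Paths}(p,p)_k,\ w(P)>0\}$ (with $\max\emptyset=-\infty$). *)

theory Defs
  imports Main "HOL-Library.Extended_Real"
begin

datatype 'g sop = Push 'g | Pop 'g | Eps

fun bar :: "'g sop \<Rightarrow> 'g sop" where
  "bar (Push a) = Pop a"
| "bar (Pop a) = Push a"
| "bar Eps = Eps"

type_synonym ('q,'g) trans = "'q \<times> int \<times> 'g sop \<times> 'q"
type_synonym ('q,'g) conf = "'q \<times> int \<times> 'g list"   (* stack: top = head *)

definition pvass :: "'q set \<Rightarrow> 'g set \<Rightarrow> ('q,'g) trans set \<Rightarrow> bool" where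
  "pvass Q G T \<longleftrightarrow> finite Q \<and> finite G \<and> finite T \<and>
     (\<forall>(p,v,\<alpha>,q)\<in>T. p \<in> Q \<and> q \<in> Q \<and>
        (\<forall>a. (\<alpha> = Push a \<or> \<alpha> = Pop a) \<longrightarrow> a \<in> G))"

definition bidirected :: "('q,'g) trans set \<Rightarrow> bool" where
  "bidirected T \<longleftrightarrow> (\<forall>p v \<alpha> q. (p,v,\<alpha>,q) \<in> T \<longrightarrow> (q,-v,bar \<alpha>,p) \<in> T)"

(* the one-step Z-relation (counter may become negative) *)
fun zstep :: "('q,'g) conf \<Rightarrow> ('q,'g) trans \<Rightarrow> ('q,'g) conf option" where
  "zstep (s,x,w) (p,v,Push a,q) = (if s = p then Some (q, x+v, a#w) else None)"
| "zstep (s,x,w) (p,v,Pop a,q) =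
     (if s = p \<and> w \<noteq> [] \<and> hd w = a then Some (q, x+v, tl w) else None)"
| "zstep (s,x,w) (p,v,Eps,q) = (if s = p then Some (q, x+v, w) else None)"

fun zrun :: "('q,'g) conf \<Rightarrow> ('q,'g) trans list \<Rightarrow> ('q,'g) conf list option" where
  "zrun c [] = Some [c]"
| "zrun c (t#ts) = (case zstep c t of None \<Rightarrow> None
                     | Some c' \<Rightarrow> map_option (\<lambda>cs. c # cs) (zrun c' ts))"

type_synonym ('q,'g) path = "'q \<times> ('q,'g) trans list"

definition confs :: "('q,'g) path \<Rightarrow> ('q,'g) conf list" where
  "confs P = the (zrun (fst P, 0, []) (snd P))"

definition is_path :: "('q,'g) trans set \<Rightarrow> 'q \<Rightarrow> 'q \<Rightarrow> ('q,'g) path \<Rightarrow> bool" where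
  "is_path T p q P \<longleftrightarrow> fst P = p \<and> set (snd P) \<subseteq> T \<and>
     (\<exists>cs. zrun (p, 0, []) (snd P) = Some cs \<and> fst (last cs) = q \<and> snd (snd (last cs)) = [])"

definition MaxSH :: "('q,'g) path \<Rightarrow> nat" where
  "MaxSH P = Max (set (map (\<lambda>c. length (snd (snd c))) (confs P)))"

definition wt :: "('q,'g) path \<Rightarrow> int" where
  "wt P = fst (snd (last (confs P)))"

definition mn :: "('q,'g) path \<Rightarrow> int" where
  "mn P = Min (set (map (\<lambda>c. fst (snd c)) (confs P)))"

definition Paths :: "('q,'g) trans set \<Rightarrow> 'q \<Rightarrow> 'q \<Rightarrow> nat \<Rightarrow> ('q,'g) path set" where
  "Paths T p q k = {P. is_path T p q P \<and> MaxSH P \<le> k}"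

(* max / sup over sets of integers, taken in ereal, with max/sup of {} = -\<infinity>;
   for the first component the Sup is attained (bounded above by 0), so it is the max *)
definition gamma :: "('q,'g) trans set \<Rightarrow> nat \<Rightarrow> 'q \<Rightarrow> 'q \<Rightarrow> ereal \<times> ereal" where
  "gamma T k p q =
    (let a = Sup {ereal (mn P) | P. P \<in> Paths T p q k}
     in (a, Sup {ereal (wt P) | P. P \<in> Paths T p q k \<and> ereal (mn P) = a}))"

definition delta :: "('q,'g) trans set \<Rightarrow> nat \<Rightarrow> 'q \<Rightarrow> ereal" where
  "delta T k p = Sup {ereal (mn P) | P. P \<in> Paths T p p k \<and> wt P > 0}"

end

theory Submission
  imports Defs
begin

definition rt :: "('q,'g) trans \<Rightarrow> ('q,'g) trans" where
  "rt t = (case t of (p,v,al,q) \<Rightarrow> (q,-v,bar al,p))"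

definition sh :: "int \<Rightarrow> ('q,'g) conf \<Rightarrow> ('q,'g) conf" where
  "sh d c = (case c of (s,x,w) \<Rightarrow> (s,x+d,w))"

lemma sh_simps[simp]: "snd (snd (sh d c)) = snd (snd c)" "fst (snd (sh d c)) = fst (snd c) + d"
  by (cases c; simp add: sh_def)+

lemma zstep_rev:
  assumes "zstep c t = Some c'" shows "zstep c' (rt t) = Some c"
proof -
  obtain s x w where c: "c = (s,x,w)" by (cases c) auto
  obtain p v al q where t: "t = (p,v,al,q)" by (cases t) auto
  show ?thesis using assms unfolding c t rt_def
    by (cases al) (auto split: if_splits)
qed

lemma zstep_sh: "zstep (sh d c) t = map_option (sh d) (zstep c t)"
proof -
  obtain s x w where c: "c = (s,x,w)" by (cases c) auto
  obtain p v al q where t: "t = (p,v,al,q)" by (cases t) auto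
  show ?thesis unfolding c t sh_def
    by (cases al) (auto simp: algebra_simps)
qed

lemma zrun_sh: "zrun (sh d c) ts = map_option (map (sh d)) (zrun c ts)"
proof (induction ts arbitrary: c)
  case Nil then show ?case by simp
next
  case (Cons t ts)
  show ?case by (simp add: zstep_sh Cons option.map_comp comp_def split: option.splits)
qed

lemma zrun_basic: "zrun c ts = Some cs \<Longrightarrow> cs \<noteq> [] \<and> hd cs = c"
  by (induction ts arbitrary: c cs) (auto split: option.splits)

lemma zrun_app:
  "zrun c ts1 = Some cs1 \<Longrightarrow> zrun (last cs1) ts2 = Some cs2 \<Longrightarrow>
   zrun c (ts1 @ ts2) = Some (cs1 @ tl cs2)"
proof (induction ts1 arbitrary: c cs1)
  case Nil
  then have "cs1 = [c]" by simp
  with Nil show ?case using zrun_basic[OF Nil(2)]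
    by (cases cs2) auto
next
  case (Cons t ts)
  from Cons.prems(1) obtain c' cs where st: "zstep c t = Some c'"
    and r: "zrun c' ts = Some cs" and cs1: "cs1 = c # cs"
    by (auto split: option.splits)
  have "cs \<noteq> []" using zrun_basic[OF r] by auto
  then have "last cs1 = last cs" using cs1 by simp
  then have "zrun c' (ts @ ts2) = Some (cs @ tl cs2)"
    using Cons.IH[OF r] Cons.prems(2) by simp
  then show ?case using st cs1 by simp
qed

lemma zrun_rev:
  "zrun c ts = Some cs \<Longrightarrow> zrun (last cs) (rev (map rt ts)) = Some (rev cs)"
proof (induction ts arbitrary: c cs)
  case Nil then show ?case by auto
next
  case (Cons t ts)
  from Cons.prems(1) obtain c' cs' where st: "zstep c t = Some c'"
    and r: "zrun c' ts = Some cs'" and cs: "cs = c # cs'"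
    by (auto split: option.splits)
  have ne: "cs' \<noteq> []" and h: "hd cs' = c'" using zrun_basic[OF r] by auto
  have IH: "zrun (last cs') (rev (map rt ts)) = Some (rev cs')" using Cons.IH[OF r] .
  have lr: "last (rev cs') = c'" using ne h by (simp add: last_rev)
  have one: "zrun (last (rev cs')) [rt t] = Some [c', c]"
    using zstep_rev[OF st] lr by simp
  have "zrun (last cs') (rev (map rt ts) @ [rt t]) = Some (rev cs' @ tl [c', c])"
    using zrun_app[OF IH one] .
  then show ?case using cs ne by simp
qed

lemma zrun_len: "zrun c ts = Some cs \<Longrightarrow> length cs = Suc (length ts)"
  by (induction ts arbitrary: c cs) (auto split: option.splits)

lemma mn_le0:
  assumes "is_path T p q P" shows "mn P \<le> 0"
proof -
  from assms obtain cs where r: "zrun (p,0,[]) (snd P) = Some cs" and f: "fst P = p"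
    unfolding is_path_def by auto
  have cf: "confs P = cs" using r f unfolding confs_def by simp
  have "cs \<noteq> []" "hd cs = (p,0,[])" using zrun_basic[OF r] by auto
  then have "(p,0,[]) \<in> set cs" by (metis list.set_sel(1))
  then have "0 \<in> set (map (\<lambda>c. fst (snd c)) cs)" by force
  then show ?thesis unfolding mn_def cf by simp
qed

lemma sup_attained:
  fixes S :: "int set"
  assumes "m0 \<in> S" "\<forall>x\<in>S. x \<le> 0"
  shows "\<exists>y\<in>S. Sup (ereal ` S) = ereal y"
proof -
  let ?S' = "{x\<in>S. x \<ge> m0}"
  have fin: "finite ?S'" by (rule finite_subset[of _ "{m0..0}"]) (use assms in auto)
  have ne: "?S' \<noteq> {}" using assms by auto
  define y where "y = Max ?S'"
  have yS: "y \<in> S" "y \<ge> m0" using Max_in[OF fin ne] unfolding y_def by auto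
  have "\<forall>x\<in>S. x \<le> y"
  proof
    fix x assume "x \<in> S"
    show "x \<le> y"
    proof (cases "x \<ge> m0")
      case True then show ?thesis using Max_ge[OF fin] \<open>x \<in> S\<close> unfolding y_def by auto
    next
      case False then show ?thesis using yS by auto
    qed
  qed
  then have "Sup (ereal ` S) \<le> ereal y" by (auto intro!: Sup_least)
  moreover have "ereal y \<le> Sup (ereal ` S)" using yS by (auto intro!: Sup_upper)
  ultimately show ?thesis using yS by (intro bexI[of _ y]) auto
qed

theorem lemma21:
  fixes Q :: "'q set" and G :: "'g set" and T :: "('q,'g) trans set"
    and k :: nat and p q :: 'q and a b :: ereal and P :: "('q,'g) path"
  assumes "pvass Q G T" and "bidirected T"
    and "p \<in> Q" and "q \<in> Q"
    and "gamma T k p q = (a, b)"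
    and "P \<in> Paths T p q k" and "ereal (wt P) > b"
  shows "delta T k p \<ge> ereal (mn P)"
proof -
  let ?S = "mn ` Paths T p q k"
  have aeq: "a = Sup {ereal (mn P) | P. P \<in> Paths T p q k}"
   and beq: "b = Sup {ereal (wt P') | P'. P' \<in> Paths T p q k \<and> ereal (mn P') = a}"
    using assms(5) unfolding gamma_def Let_def by auto
  have setS: "{ereal (mn P) | P. P \<in> Paths T p q k} = ereal ` ?S" by (simp only: setcompr_eq_image image_image Collect_mem_eq)
  have "\<forall>x\<in>?S. x \<le> 0" using mn_le0 unfolding Paths_def by auto
  then obtain y where yS: "y \<in> ?S" and ay: "a = ereal y"
    using sup_attained[of "mn P" ?S] assms(6) aeq setS by auto
  then obtain P' where P': "P' \<in> Paths T p q k" "mn P' = y" by auto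
  have "ereal (mn P) \<le> a" unfolding aeq by (rule Sup_upper) (use assms(6) in blast)
  then have mnle: "mn P \<le> mn P'" using ay P' by simp
  have "ereal (wt P') \<le> b" unfolding beq by (rule Sup_upper) (use P' ay in blast)
  then have "ereal (wt P') < ereal (wt P)" using assms(7) by (rule le_less_trans)
  then have wtlt: "wt P' < wt P" by simp
  from assms(6) obtain cs1 where r1: "zrun (p,0,[]) (snd P) = Some cs1"
    and l1: "fst (last cs1) = q" "snd (snd (last cs1)) = []" and f1: "fst P = p"
    and T1: "set (snd P) \<subseteq> T" and k1: "MaxSH P \<le> k"
    unfolding Paths_def is_path_def by auto
  from P'(1) obtain cs2 where r2: "zrun (p,0,[]) (snd P') = Some cs2"
    and l2: "fst (last cs2) = q" "snd (snd (last cs2)) = []" and f2: "fst P' = p"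
    and T2: "set (snd P') \<subseteq> T" and k2: "MaxSH P' \<le> k"
    unfolding Paths_def is_path_def by auto
  have c1: "confs P = cs1" using r1 f1 unfolding confs_def by simp
  have c2: "confs P' = cs2" using r2 f2 unfolding confs_def by simp
  define W where "W = wt P"
  define W' where "W' = wt P'"
  have last1: "last cs1 = (q, W, [])" using l1 c1 unfolding W_def wt_def by (cases "last cs1") auto
  have last2: "last cs2 = (q, W', [])" using l2 c2 unfolding W'_def wt_def by (cases "last cs2") auto
  have ne2: "cs2 \<noteq> []" "hd cs2 = (p,0,[])" using zrun_basic[OF r2] by auto
  have ne1: "cs1 \<noteq> []" using zrun_basic[OF r1] by auto
  define R where "R = rev (map rt (snd P'))"
  define d where "d = W - W'"
  have rr: "zrun (q, W', []) R = Some (rev cs2)" using zrun_rev[OF r2] last2 R_def by simp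
  have e: "sh d (q, W', []) = (q, W, [])" unfolding sh_def d_def by simp
  have rs: "zrun (q, W, []) R = Some (map (sh d) (rev cs2))"
    using zrun_sh[of d "(q,W',[])" R] rr unfolding e by simp
  define cs where "cs = cs1 @ tl (map (sh d) (rev cs2))"
  define PP where "PP = (p, snd P @ R)"
  have rc: "zrun (p,0,[]) (snd PP) = Some cs"
    using zrun_app[OF r1, of R "map (sh d) (rev cs2)"] rs last1 unfolding PP_def cs_def by simp
  have cPP: "confs PP = cs" using rc unfolding confs_def PP_def by simp
  have lastcs: "last cs = (p, d, [])"
  proof -
    have "last (rev cs2) = (p,0,[])" using ne2 by (simp add: last_rev)
    then have lm: "last (map (sh d) (rev cs2)) = (p, d, [])" using ne2 by (simp add: last_map sh_def)
    show ?thesis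
    proof (cases "tl (map (sh d) (rev cs2)) = []")
      case True
      then have "length cs2 = 1" using ne2(1) by (cases "rev cs2") auto
      then have "last cs2 = hd cs2" by (cases cs2) auto
      then have "(p,0,[]) = (q, W', [])" using last2 ne2 by simp
      then have "q = p" "W' = 0" by auto
      moreover have "cs = cs1" using True unfolding cs_def by simp
      ultimately show ?thesis using last1 unfolding d_def by simp
    next
      case False
      then have "last cs = last (tl (map (sh d) (rev cs2)))" unfolding cs_def by simp
      also have "\<dots> = last (map (sh d) (rev cs2))" using False
        by (metis last_tl)
      finally show ?thesis using lm by simp
    qed
  qed
  have TR: "set R \<subseteq> T"
  proof
    fix t assume "t \<in> set R"
    then obtain t0 where "t0 \<in> set (snd P')" "t = rt t0" unfolding R_def by auto
    moreover obtain a1 a2 a3 a4 where "t0 = (a1,a2,a3,a4)" by (cases t0) auto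
    ultimately show "t \<in> T" using T2 assms(2) unfolding bidirected_def rt_def
      by auto
  qed
  have elem: "c \<in> set cs \<Longrightarrow> c \<in> set cs1 \<or> (\<exists>c0\<in>set cs2. c = sh d c0)" for c
  proof -
    assume "c \<in> set cs"
    moreover have "set (tl (map (sh d) (rev cs2))) \<subseteq> set (map (sh d) (rev cs2))"
      by (cases "map (sh d) (rev cs2)") auto
    ultimately show ?thesis unfolding cs_def by auto
  qed
  have fin1: "finite (set (map (\<lambda>c. length (snd (snd c))) cs1))" by simp
  have sk1: "length (snd (snd c)) \<le> k" if "c \<in> set cs1" for c
  proof -
    have "length (snd (snd c)) \<in> set (map (\<lambda>c. length (snd (snd c))) cs1)" using that by auto
    then have "length (snd (snd c)) \<le> MaxSH P" unfolding MaxSH_def c1 using fin1 by simp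
    then show ?thesis using k1 by simp
  qed
  have fin2: "finite (set (map (\<lambda>c. length (snd (snd c))) cs2))" by simp
  have sk2: "length (snd (snd c)) \<le> k" if "c \<in> set cs2" for c
  proof -
    have "length (snd (snd c)) \<in> set (map (\<lambda>c. length (snd (snd c))) cs2)" using that by auto
    then have "length (snd (snd c)) \<le> MaxSH P'" unfolding MaxSH_def c2 using fin2 by simp
    then show ?thesis using k2 by simp
  qed
  have m1: "c \<in> set cs1 \<Longrightarrow> mn P \<le> fst (snd c)" for c
    unfolding mn_def c1 by (rule Min_le) auto
  have m2: "c \<in> set cs2 \<Longrightarrow> mn P' \<le> fst (snd c)" for c
    unfolding mn_def c2 by (rule Min_le) auto
  have dpos: "d > 0" using wtlt unfolding d_def W_def W'_def by simp
  have csne: "cs \<noteq> []" using ne1 unfolding cs_def by simp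
  have MPP: "MaxSH PP \<le> k"
    unfolding MaxSH_def cPP
  proof (rule Max.boundedI)
    show "finite (set (map (\<lambda>c. length (snd (snd c))) cs))" by simp
    show "set (map (\<lambda>c. length (snd (snd c))) cs) \<noteq> {}" using csne by simp
    fix n assume "n \<in> set (map (\<lambda>c. length (snd (snd c))) cs)"
    then obtain c where "c \<in> set cs" "n = length (snd (snd c))" by auto
    then show "n \<le> k" using elem[of c] sk1[of c] sk2 by auto
  qed
  have mPP: "mn P \<le> mn PP"
    unfolding mn_def[of PP] cPP
  proof (rule Min.boundedI)
    show "finite (set (map (\<lambda>c. fst (snd c)) cs))" by simp
    show "set (map (\<lambda>c. fst (snd c)) cs) \<noteq> {}" using csne by simp
    fix n assume "n \<in> set (map (\<lambda>c. fst (snd c)) cs)"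
    then obtain c where cc: "c \<in> set cs" "n = fst (snd c)" by auto
    show "mn P \<le> n"
    proof (cases "c \<in> set cs1")
      case True then show ?thesis using m1 cc by simp
    next
      case False
      then obtain c0 where "c0 \<in> set cs2" "c = sh d c0" using elem cc by blast
      then show ?thesis using m2[of c0] mnle dpos cc by auto
    qed
  qed
  have wPP: "wt PP = d" unfolding wt_def cPP lastcs by simp
  have PPin: "PP \<in> Paths T p p k"
    unfolding Paths_def is_path_def using MPP rc lastcs T1 TR by (auto simp: PP_def)
  have "ereal (mn PP) \<le> delta T k p"
    unfolding delta_def by (rule Sup_upper) (use PPin wPP dpos in blast)
  moreover have "ereal (mn P) \<le> ereal (mn PP)" using mPP by simp
  ultimately show ?thesis by (rule order_trans[rotated])
qed

end
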